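(* Let $M\cong\prec a_1,\ldots,a_m\succ$ and $N\cong\prec b_1,\ldots,b_n\succ$ be integral lattices relative to good BONGs with $m\ge n$, and let $j\in[1,\min\{m-1,n\}]^E$. If $R_j=-2e$ and $R_{j+1}=0$, then $d[a_{1,j}b_{1,j}]\ge A_j$.
   Context: $F$ dyadic local field, $\mathcal O_F$, valuation $\operatorname{ord}$, $e=\operatorname{ord}(2)$, $d(c)=\operatorname{ord}(c^{-1}\mathfrak d(c))$ with quadratic defect $\mathfrak d(c)=\bigcap_{x\in F}(c-x^2)\mathcal O_F$. Integral: $Q(M)\subseteq\mathcal O_F$. BONGs: $x_1,\ldots,x_m\in FM$ is a BONG of $M$ if $x_1\in M$ with $Q(x_1)\mathcal O_F=\mathfrak nM$ and $x_2,\ldots,x_m$ is a BONG of the projection of $M$ onto $(Fx_1)^\perp$; good if $\operatorname{ord}Q(x_i)\le\operatorname{ord}Q(x_{i+2})$; $M\cong\prec a_1,\ldots,a_m\succ$ means $Q(x_i)=a_i$. $R_i=\operatorname{ord}(a_i)$, $S_i=\operatorname{ord}(b_i)$. $a_{i,j}=a_i\cdots a_j$, $a_{i,i-1}=1$, similarly $b_{i,j}$. $[h,k]^E$ is the set of even integers in $[h,k]$. For $1\le i\le m-1$, $\alpha_i=\min\{T_0,\ldots,T_{m-1}\}$ with $T_0=(R_{i+1}-R_i)/2+e$, $T_j=R_{i+1}-R_j+d(-a_ja_{j+1})$ ($1\le j\le i$), $T_j=R_{j+1}-R_i+d(-a_ja_{j+1})$ ($i\le j\le m-1$); $\beta_i$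 is defined likewise from $N$. For $c\in F^\times$, $0\le i\le m$, $0\le j\le n$: $d[ca_{1,i}b_{1,j}]=\min\{d(ca_{1,i}b_{1,j}),\alpha_i,\beta_j\}$, where $\alpha_i$ is omitted if $i\in\{0,m\}$ and $\beta_j$ omitted if $j\in\{0,n\}$. For $1\le i\le\min\{m-1,n\}$, $A_i=\min\{(R_{i+1}-S_i)/2+e,\ R_{i+1}-S_i+d[-a_{1,i+1}b_{1,i-1}],\ R_{i+1}+R_{i+2}-S_{i-1}-S_i+d[a_{1,i+2}b_{1,i-2}]\}$, the third term omitted if $i=1$ or $i=m-1$. *)

theory Defs
  imports "HOL-Library.Extended_Real"
begin

text \<open>A field F with a normalized discrete valuation ord (only meaningful on nonzero
elements; ord 0 is irrelevant and stands for infinity).\<close>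

definition valring :: "('a::field \<Rightarrow> int) \<Rightarrow> 'a set" where
  "valring ord = {x. x = 0 \<or> 0 \<le> ord x}"

definition dyadic_local_field :: "('a::field \<Rightarrow> int) \<Rightarrow> bool" where
  "dyadic_local_field ord \<longleftrightarrow>
     (\<forall>x y. x \<noteq> 0 \<longrightarrow> y \<noteq> 0 \<longrightarrow> ord (x * y) = ord x + ord y) \<and>
     (\<forall>x y. x \<noteq> 0 \<longrightarrow> y \<noteq> 0 \<longrightarrow> x + y \<noteq> 0 \<longrightarrow> min (ord x) (ord y) \<le> ord (x + y)) \<and>
     (\<exists>p. p \<noteq> 0 \<and> ord p = 1) \<and>
     (\<exists>S. finite S \<and> S \<subseteq> valring ord \<and>
          (\<forall>x\<in>valring ord. \<exists>s\<in>S. x = s \<or> 1 \<le> ord (x - s))) \<and>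
     (2::'a) \<noteq> 0 \<and> 0 < ord 2 \<and>
     (\<forall>s::nat \<Rightarrow> 'a.
        (\<forall>K. \<exists>N. \<forall>p\<ge>N. \<forall>q\<ge>N. s p = s q \<or> K \<le> ord (s p - s q)) \<longrightarrow>
        (\<exists>l. \<forall>K. \<exists>N. \<forall>p\<ge>N. s p = l \<or> K \<le> ord (s p - l)))"

definition qdefect :: "('a::field \<Rightarrow> int) \<Rightarrow> 'a \<Rightarrow> 'a set" where
  "qdefect ord c = (\<Inter>x. {(c - x^2) * y | y. y \<in> valring ord})"

definition ordI :: "('a::field \<Rightarrow> int) \<Rightarrow> 'a set \<Rightarrow> ereal" where
  "ordI ord I = (INF z \<in> I - {0}. ereal (real_of_int (ord z)))"

definition qd :: "('a::field \<Rightarrow> int) \<Rightarrow> 'a \<Rightarrow> ereal" where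
  "qd ord c = ordI ord (qdefect ord c) - ereal (real_of_int (ord c))"

text \<open>The quadratic space is F^k (vectors nat => F vanishing from index k on) with the
symmetric bilinear form given by a Gram matrix G; Q(x) = B(x,x).\<close>

definition vsp :: "nat \<Rightarrow> (nat \<Rightarrow> 'a::zero) set" where
  "vsp k = {x. \<forall>i\<ge>k. x i = 0}"

definition bil :: "(nat \<Rightarrow> nat \<Rightarrow> 'a::field) \<Rightarrow> nat \<Rightarrow> (nat \<Rightarrow> 'a) \<Rightarrow> (nat \<Rightarrow> 'a) \<Rightarrow> 'a" where
  "bil G k x y = (\<Sum>i<k. \<Sum>j<k. x i * G i j * y j)"

definition qf :: "(nat \<Rightarrow> nat \<Rightarrow> 'a::field) \<Rightarrow> nat \<Rightarrow> (nat \<Rightarrow> 'a) \<Rightarrow> 'a" where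
  "qf G k x = bil G k x x"

definition lin_indep :: "nat \<Rightarrow> (nat \<Rightarrow> nat \<Rightarrow> 'a::field) \<Rightarrow> bool" where
  "lin_indep r e \<longleftrightarrow> (\<forall>c. (\<forall>t. (\<Sum>i<r. c i * e i t) = 0) \<longrightarrow> (\<forall>i<r. c i = 0))"

definition is_lattice :: "('a::field \<Rightarrow> int) \<Rightarrow> nat \<Rightarrow> (nat \<Rightarrow> 'a) set \<Rightarrow> bool" where
  "is_lattice ord k L \<longleftrightarrow> (\<exists>r e. (\<forall>i<r. e i \<in> vsp k) \<and> lin_indep r e \<and>
      L = {(\<lambda>t. \<Sum>i<r. c i * e i t) | c. \<forall>i<r. c i \<in> valring ord})"

definition integral_lattice :: "('a::field \<Rightarrow> int) \<Rightarrow> (nat \<Rightarrow> nat \<Rightarrow> 'a) \<Rightarrow> nat \<Rightarrow> (nat \<Rightarrow> 'a) set \<Rightarrow> bool" where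
  "integral_lattice ord G k L \<longleftrightarrow> (\<forall>x\<in>L. qf G k x \<in> valring ord)"

definition normideal :: "('a::field \<Rightarrow> int) \<Rightarrow> (nat \<Rightarrow> nat \<Rightarrow> 'a) \<Rightarrow> nat \<Rightarrow> (nat \<Rightarrow> 'a) set \<Rightarrow> 'a set" where
  "normideal ord G k L = {(\<Sum>i<r. c i * qf G k (v i)) | (r::nat) c v. \<forall>i<r. c i \<in> valring ord \<and> v i \<in> L}"

definition proj :: "(nat \<Rightarrow> nat \<Rightarrow> 'a::field) \<Rightarrow> nat \<Rightarrow> (nat \<Rightarrow> 'a) \<Rightarrow> (nat \<Rightarrow> 'a) \<Rightarrow> (nat \<Rightarrow> 'a)" where
  "proj G k x y = (\<lambda>t. y t - (bil G k y x / qf G k x) * x t)"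

fun is_BONG :: "('a::field \<Rightarrow> int) \<Rightarrow> (nat \<Rightarrow> nat \<Rightarrow> 'a) \<Rightarrow> nat \<Rightarrow> (nat \<Rightarrow> 'a) set \<Rightarrow> (nat \<Rightarrow> 'a) list \<Rightarrow> bool" where
  "is_BONG ord G k L [] \<longleftrightarrow> L = {(\<lambda>_. 0)}"
| "is_BONG ord G k L (x # xs) \<longleftrightarrow>
     x \<in> L \<and> qf G k x \<noteq> 0 \<and>
     {c * qf G k x | c. c \<in> valring ord} = normideal ord G k L \<and>
     is_BONG ord G k (proj G k x ` L) xs"

definition good_BONG_lattice :: "('a::field \<Rightarrow> int) \<Rightarrow> (nat \<Rightarrow> nat \<Rightarrow> 'a) \<Rightarrow> nat \<Rightarrow> (nat \<Rightarrow> 'a) set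
    \<Rightarrow> (nat \<Rightarrow> 'a) \<Rightarrow> nat \<Rightarrow> bool" where
  "good_BONG_lattice ord G k L a m \<longleftrightarrow> is_lattice ord k L \<and>
     (\<exists>xs. is_BONG ord G k L xs \<and> length xs = m \<and>
        (\<forall>i. 1 \<le> i \<longrightarrow> i \<le> m \<longrightarrow> qf G k (xs ! (i - 1)) = a i) \<and>
        (\<forall>i. 1 \<le> i \<longrightarrow> i + 2 \<le> m \<longrightarrow> ord (a i) \<le> ord (a (i + 2))))"

text \<open>a_{i,j} = a_i ... a_j (empty product 1).\<close>
definition prodr :: "(nat \<Rightarrow> 'a::field) \<Rightarrow> nat \<Rightarrow> nat \<Rightarrow> 'a" where
  "prodr a i j = (\<Prod>k\<in>{i..j}. a k)"

definition alpha :: "('a::field \<Rightarrow> int) \<Rightarrow> (nat \<Rightarrow> 'a) \<Rightarrow> nat \<Rightarrow> nat \<Rightarrow> ereal" where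
  "alpha ord a m i = Min
     ({ereal ((real_of_int (ord (a (i+1))) - real_of_int (ord (a i))) / 2 + real_of_int (ord 2))}
      \<union> {ereal (real_of_int (ord (a (i+1)) - ord (a j))) + qd ord (- (a j * a (j+1))) | j. 1 \<le> j \<and> j \<le> i}
      \<union> {ereal (real_of_int (ord (a (j+1)) - ord (a i))) + qd ord (- (a j * a (j+1))) | j. i \<le> j \<and> j \<le> m - 1})"

definition dbr :: "('a::field \<Rightarrow> int) \<Rightarrow> (nat \<Rightarrow> 'a) \<Rightarrow> nat \<Rightarrow> (nat \<Rightarrow> 'a) \<Rightarrow> nat \<Rightarrow> 'a \<Rightarrow> nat \<Rightarrow> nat \<Rightarrow> ereal" where
  "dbr ord a m b n c i j = min (qd ord (c * prodr a 1 i * prodr b 1 j))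
      (min (if i = 0 \<or> i = m then \<infinity> else alpha ord a m i)
           (if j = 0 \<or> j = n then \<infinity> else alpha ord b n j))"

definition Acoef :: "('a::field \<Rightarrow> int) \<Rightarrow> (nat \<Rightarrow> 'a) \<Rightarrow> nat \<Rightarrow> (nat \<Rightarrow> 'a) \<Rightarrow> nat \<Rightarrow> nat \<Rightarrow> ereal" where
  "Acoef ord a m b n i = min
     (ereal (real_of_int (ord (a (i+1)) - ord (b i)) / 2 + real_of_int (ord 2)))
     (min (ereal (real_of_int (ord (a (i+1)) - ord (b i))) + dbr ord a m b n (-1) (i+1) (i-1))
          (if i = 1 \<or> i = m - 1 then \<infinity>
           else ereal (real_of_int (ord (a (i+1)) + ord (a (i+2)) - ord (b (i-1)) - ord (b i)))
                + dbr ord a m b n 1 (i+2) (i-2)))"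

end

theory Submission
  imports Defs
begin



lemma bil_lin1: "bil G k (\<lambda>t. \<alpha> * u t + \<beta> * v t) w = \<alpha> * bil G k u w + \<beta> * bil G k v w"
  unfolding bil_def by (simp add: algebra_simps sum.distrib sum_distrib_left)
lemma bil_lin2: "bil G k w (\<lambda>t. \<alpha> * u t + \<beta> * v t) = \<alpha> * bil G k w u + \<beta> * bil G k w v"
  unfolding bil_def by (simp add: algebra_simps sum.distrib sum_distrib_left)
lemma bil_sym: "\<forall>i i'. G i i' = G i' i \<Longrightarrow> bil G k u v = bil G k v u"
  unfolding bil_def by (subst sum.swap) (simp add: algebra_simps)

lemma proj_alt: "proj G k x y = (\<lambda>t. 1 * y t + (- (bil G k y x / qf G k x)) * x t)"
  unfolding proj_def by auto

lemma qf_proj: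
  assumes sym: "\<forall>i i'. G i i' = G i' i" and nz: "qf G k x \<noteq> 0"
  shows "qf G k (proj G k x y) = qf G k y - (bil G k y x)^2 / qf G k x"
proof -
  define c where "c = bil G k y x / qf G k x"
  have "qf G k (proj G k x y) = bil G k (\<lambda>t. 1 * y t + (-c) * x t) (\<lambda>t. 1 * y t + (-c) * x t)"
    unfolding qf_def proj_alt c_def ..
  also have "\<dots> = qf G k y - c * bil G k x y - c * bil G k y x + c*c * qf G k x"
    unfolding bil_lin1 bil_lin2 qf_def by (simp add: algebra_simps)
  also have "\<dots> = qf G k y - (bil G k y x)^2 / qf G k x"
    using nz bil_sym[OF sym, of k x y] unfolding c_def by (simp add: field_simps power2_eq_square)
  finally show ?thesis .
qed

lemma proj_add: "proj G k x (\<lambda>t. u t + v t) = (\<lambda>t. proj G k x u t + proj G k x v t)"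
proof -
  have "bil G k (\<lambda>t. u t + v t) x = bil G k u x + bil G k v x"
    using bil_lin1[of G k 1 u 1 v x] by simp
  then show ?thesis unfolding proj_def by (auto simp: algebra_simps add_divide_distrib)
qed

definition addclosed :: "(nat \<Rightarrow> 'a::plus) set \<Rightarrow> bool" where
  "addclosed L \<longleftrightarrow> (\<forall>u\<in>L. \<forall>v\<in>L. (\<lambda>t. u t + v t) \<in> L)"

lemma addclosed_proj: "addclosed L \<Longrightarrow> addclosed (proj G k x ` L)"
  unfolding addclosed_def by (auto simp: proj_add[symmetric])


lemma h1: fixes a c2 :: "'a::field" shows "(c2*a/2)^2 = (c2^2 * a^2) / 4"
  by (simp only: power_divide power_mult_distrib) simp
lemma h2: fixes a c2 :: "'a::field" assumes an: "a \<noteq> 0" shows "(c2^2*a^2)/4 / a = a*(c2^2/4)"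
proof -
  have "a^2 / a = a" using an by (simp add: power2_eq_square)
  then show ?thesis by (metis times_divide_eq_right divide_divide_eq_left' mult.commute)
qed
lemma t1: fixes a c1 c2 :: "'a::field" assumes an: "a \<noteq> 0"
  shows "c1 * a - (c2 * a / 2)^2 / a = a * (c1 - c2^2 / 4)"
  unfolding h1 h2[OF an] by (simp only: right_diff_distrib mult.commute)
lemma t2: fixes a c1 B :: "'a::field" assumes an: "a \<noteq> 0"
  shows "-(a * (c1 * a - B^2 / a)) - B^2 = - (a^2 * c1)"
proof -
  have e: "a * (B^2/a) = B^2" using an by simp
  have "-(a * (c1 * a - B^2 / a)) - B^2 = -(a*(c1*a)) + a * (B^2/a) - B^2" by (simp only: right_diff_distrib) simp
  also have "\<dots> = - (a^2 * c1)" unfolding e by (simp add: power2_eq_square mult_ac)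
  finally show ?thesis .
qed
lemma prodr_step: "prodr (f::nat\<Rightarrow>'a::field) 1 (2 * Suc s) = prodr f 1 (2*s) * f (2*s+1) * f (2*s+1+1)"
proof -
  have "2 * Suc s = Suc (Suc (2 * s))" by simp
  then show ?thesis unfolding prodr_def by (simp only: prod.cl_ivl_Suc) (simp add: mult.assoc)
qed
lemma eq_pairs: fixes a b :: "nat \<Rightarrow> 'a::field" shows "(P * a t * a (t+1)) * (Q * b t * b (t+1)) =
          (P * Q) * ((-(a t * a (t+1))) * (-(b t * b (t+1))))"
  by (simp add: mult_ac)
lemma prodr_nz: assumes "\<And>i. 1 \<le> i \<Longrightarrow> i \<le> m \<Longrightarrow> (a::nat\<Rightarrow>'a::field) i \<noteq> 0" "q \<le> m"
  shows "prodr a 1 q \<noteq> 0" unfolding prodr_def using assms by (subst prod_zero_iff) auto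


locale vf =
  fixes ord :: "'a::field \<Rightarrow> int"
  assumes omult: "x \<noteq> 0 \<Longrightarrow> y \<noteq> 0 \<Longrightarrow> ord (x*y) = ord x + ord y"
  and oadd: "x \<noteq> 0 \<Longrightarrow> y \<noteq> 0 \<Longrightarrow> x + y \<noteq> 0 \<Longrightarrow> min (ord x) (ord y) \<le> ord (x+y)"
  and unif: "\<exists>p. p \<noteq> 0 \<and> ord p = 1"
  and two: "(2::'a) \<noteq> 0"
  and two_pos: "0 < ord 2"
begin

definition vge :: "'a \<Rightarrow> int \<Rightarrow> bool" where "vge u L \<longleftrightarrow> u = 0 \<or> L \<le> ord u"

lemma ord1: "ord 1 = 0" using omult[of 1 1] by simp
lemma ord_inv: "x \<noteq> 0 \<Longrightarrow> ord (inverse x) = - ord x" using omult[of x "inverse x"] ord1 by simp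
lemma ord_div: "x\<noteq>0 \<Longrightarrow> y\<noteq>0 \<Longrightarrow> ord (x/y) = ord x - ord y" by (simp add: divide_inverse omult ord_inv)
lemma ord_m1: "ord (-1) = 0" using omult[of "-1" "-1"] ord1 by simp
lemma ord_neg: "ord (-x) = ord x"
proof (cases "x = 0")
  case False thus ?thesis using omult[of "-1" x] ord_m1 by simp
qed simp
lemma ord_pow: "x \<noteq> 0 \<Longrightarrow> ord (x^n) = int n * ord x"
  by (induction n) (auto simp: ord1 omult algebra_simps)

lemma vge_zero[simp]: "vge 0 L" by (simp add: vge_def)
lemma vge_ord: "vge u (ord u)" by (simp add: vge_def)
lemma vge_mono: "vge u L \<Longrightarrow> L' \<le> L \<Longrightarrow> vge u L'" by (auto simp: vge_def)
lemma vge_neg: "vge u L \<Longrightarrow> vge (-u) L" by (auto simp: vge_def ord_neg)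
lemma vge_add: "vge u L \<Longrightarrow> vge v L \<Longrightarrow> vge (u+v) L"
  unfolding vge_def using oadd[of u v] by (cases "u=0"; cases "v=0"; cases "u+v=0"; auto)
lemma vge_diff: "vge u L \<Longrightarrow> vge v L \<Longrightarrow> vge (u-v) L"
  using vge_add[of u L "-v"] vge_neg[of v L] by simp
lemma vge_mult: "vge u L1 \<Longrightarrow> vge v L2 \<Longrightarrow> vge (u*v) (L1+L2)"
  unfolding vge_def by (cases "u = 0"; cases "v = 0"; auto simp: omult)
lemma vge_nz: "vge u L \<Longrightarrow> u \<noteq> 0 \<Longrightarrow> L \<le> ord u" by (simp add: vge_def)
lemma valring_iff: "x \<in> valring ord \<longleftrightarrow> vge x 0" by (simp add: valring_def vge_def)

lemma qd_witness:
  assumes "x - w^2 \<noteq> 0"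
  shows "qd ord x \<ge> ereal (real_of_int (ord (x - w^2) - ord x))"
proof -
  have "ordI ord (qdefect ord x) \<ge> ereal (real_of_int (ord (x - w^2)))"
    unfolding ordI_def
  proof (rule INF_greatest)
    fix z assume "z \<in> qdefect ord x - {0}"
    then obtain y where y: "z = (x - w^2) * y" "y \<in> valring ord" "z \<noteq> 0"
      unfolding qdefect_def by blast
    then have "y \<noteq> 0" by auto
    with y have "ord y \<ge> 0" by (simp add: valring_def)
    with y `y \<noteq> 0` assms show "ereal (real_of_int (ord (x - w^2))) \<le> ereal (real_of_int (ord z))"
      by (simp add: omult)
  qed
  then show ?thesis unfolding qd_def
    by (cases "ordI ord (qdefect ord x)") auto
qed

lemma qd_square:
  assumes "x = w^2" shows "qd ord x = \<infinity>"
proof -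
  have "qdefect ord x - {0} = {}"
  proof -
    have "z = 0" if zq: "z \<in> qdefect ord x" for z
    proof -
      obtain y where "z = (x - w^2) * y" using zq unfolding qdefect_def by blast
      with assms show "z = 0" by simp
    qed
    then show ?thesis by blast
  qed
  then show ?thesis unfolding qd_def ordI_def by (simp only:) (simp add: top_ereal_def)
qed

lemma qd_nonneg: "qd ord x \<ge> 0"
proof (cases "x = 0")
  case True thus ?thesis using qd_square[of x 0] by simp
next
  case False thus ?thesis using qd_witness[of x 0] by (simp add: zero_ereal_def)
qed

lemma qd_gt_witness:
  assumes "x \<noteq> 0" "K \<ge> 0" "qd ord x > ereal (real_of_int K)"
  shows "\<exists>w. vge (x - w^2) (ord x + K + 1)"
proof (rule ccontr)
  assume H: "\<not> ?thesis"
  obtain p where p: "p \<noteq> 0" "ord p = 1" using unif by blast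
  define z where "z = x * p ^ nat K"
  have zn: "z \<noteq> 0" using assms p by (simp add: z_def)
  have oz: "ord z = ord x + K" using assms p by (simp add: z_def omult ord_pow)
  have "z \<in> qdefect ord x"
    unfolding qdefect_def
  proof (rule InterI, clarsimp)
    fix w
    have nz: "x - w^2 \<noteq> 0" and lt: "ord (x - w^2) \<le> ord x + K"
      using H[unfolded vge_def] by (auto simp: not_le)
    have "z = (x - w^2) * (z / (x - w^2))" using nz by simp
    moreover have "z / (x - w^2) \<in> valring ord"
      using nz zn lt oz by (simp add: valring_def ord_div)
    ultimately show "\<exists>y. z = (x - w^2) * y \<and> y \<in> valring ord" by blast
  qed
  then have "ordI ord (qdefect ord x) \<le> ereal (real_of_int (ord z))"
    unfolding ordI_def using zn by (intro INF_lower) auto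
  then have "qd ord x \<le> ereal (real_of_int K)"
    unfolding qd_def oz by (cases "ordI ord (qdefect ord x)") auto
  with assms(3) show False by simp
qed


lemma qd_mult:
  assumes xn: "x \<noteq> 0" and yn: "y \<noteq> 0" and hx: "qd ord x \<ge> D" and hy: "qd ord y \<ge> D"
  shows "qd ord (x*y) \<ge> D"
proof (rule ccontr)
  assume "\<not> D \<le> qd ord (x*y)"
  then have lt: "qd ord (x*y) < D" by simp
  have xyn: "x*y \<noteq> 0" using xn yn by simp
  have "ordI ord (qdefect ord (x*y)) < D + ereal (real_of_int (ord (x*y)))"
    using lt unfolding qd_def by (cases "ordI ord (qdefect ord (x*y))"; cases D) auto
  then obtain z where z: "z \<in> qdefect ord (x*y)" "z \<noteq> 0"
    and zl: "ereal (real_of_int (ord z)) < D + ereal (real_of_int (ord (x*y)))"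
    unfolding ordI_def INF_less_iff by blast
  define K where "K = ord z - ord (x*y)"
  have zK: "\<And>W. z \<in> {(x*y - W^2) * c | c. c \<in> valring ord}"
    using z(1) unfolding qdefect_def by blast
  obtain c0 where c0: "z = (x*y - 0^2) * c0" "c0 \<in> valring ord" using zK[of 0] by blast
  then have "c0 \<noteq> 0" using z by auto
  with c0 have "ord c0 \<ge> 0" by (simp add: valring_def)
  then have K0: "K \<ge> 0" using c0 xyn `c0 \<noteq> 0` by (simp add: K_def omult)
  have DK: "ereal (real_of_int K) < D"
    using zl unfolding K_def by (cases D) auto
  obtain w1 where w1: "vge (x - w1^2) (ord x + K + 1)"
    using qd_gt_witness[OF xn K0] DK hx by force
  obtain w2 where w2: "vge (y - w2^2) (ord y + K + 1)"
    using qd_gt_witness[OF yn K0] DK hy by force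
  have e: "x*y - (w1*w2)^2 = x * (y - w2^2) + w2^2 * (x - w1^2)"
    by (simp add: algebra_simps power2_eq_square)
  have "vge (w2^2) (ord y)"
  proof -
    have "w2^2 = y - (y - w2^2)" by simp
    moreover have "vge (y - (y - w2^2)) (ord y)"
      using vge_diff[OF vge_ord[of y] vge_mono[OF w2]] K0 by simp
    ultimately show ?thesis by simp
  qed
  then have "vge (w2^2 * (x - w1^2)) (ord y + (ord x + K + 1))"
    by (rule vge_mult[OF _ w1])
  then have v2: "vge (w2^2 * (x - w1^2)) (ord x + (ord y + K + 1))"
    by (simp add: algebra_simps)
  have v1: "vge (x * (y - w2^2)) (ord x + (ord y + K + 1))"
    by (rule vge_mult[OF vge_ord w2])
  have "vge (x*y - (w1*w2)^2) (ord (x*y) + K + 1)"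
    unfolding e using vge_add[OF v1 v2] xn yn by (simp add: omult algebra_simps)
  moreover obtain c where c: "z = (x*y - (w1*w2)^2) * c" "c \<in> valring ord"
    using zK[of "w1*w2"] by blast
  ultimately have "x*y - (w1*w2)^2 \<noteq> 0" "c \<noteq> 0" and
    o1: "ord (x*y) + K + 1 \<le> ord (x*y - (w1*w2)^2)" using z by (auto simp: vge_def)
  moreover have "ord c \<ge> 0" using c `c \<noteq> 0` by (simp add: valring_def)
  ultimately have "ord z \<ge> ord (x*y) + K + 1" using c by (simp add: omult)
  then show False unfolding K_def by simp
qed


lemma lattice_addclosed:
  assumes "is_lattice ord k L" shows "addclosed L"
proof -
  from assms obtain r and e :: "nat \<Rightarrow> nat \<Rightarrow> 'a" where L: "L = {(\<lambda>t. \<Sum>i<r. c i * e i t) | c. \<forall>i<r. c i \<in> valring ord}"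
    unfolding is_lattice_def by auto
  show ?thesis unfolding addclosed_def
  proof (intro ballI)
    fix u v assume "u \<in> L" "v \<in> L"
    then obtain c1 c2 where u: "u = (\<lambda>t. \<Sum>i<r. c1 i * e i t)" "\<forall>i<r. c1 i \<in> valring ord"
      and v: "v = (\<lambda>t. \<Sum>i<r. c2 i * e i t)" "\<forall>i<r. c2 i \<in> valring ord" unfolding L by blast
    have "(\<lambda>t. u t + v t) = (\<lambda>t. \<Sum>i<r. (c1 i + c2 i) * e i t)"
      unfolding u v by (simp add: algebra_simps sum.distrib)
    moreover have "\<forall>i<r. c1 i + c2 i \<in> valring ord"
      using u v by (simp add: valring_iff vge_add)
    ultimately show "(\<lambda>t. u t + v t) \<in> L" unfolding L mem_Collect_eq
      by (intro exI[of _ "\<lambda>i. c1 i + c2 i"]) simp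
  qed
qed

end


context vf begin
lemma bong_core:
  assumes sym: "\<forall>i i'. G i i' = G i' i" and ac: "addclosed L" and x: "x \<in> L" "qf G k x \<noteq> 0"
    and ni: "{c * qf G k x | c. c \<in> valring ord} = normideal ord G k L"
    and y: "y \<in> L" and nz: "qf G k (proj G k x y) \<noteq> 0"
  shows "ord (qf G k (proj G k x y)) \<ge> ord (qf G k x) - 2 * ord 2"
    and "qd ord (-(qf G k x * qf G k (proj G k x y))) \<ge> ereal (real_of_int (ord (qf G k x) - ord (qf G k (proj G k x y))))"
proof -
  define a where "a = qf G k x"
  define a' where "a' = qf G k (proj G k x y)"
  define B where "B = bil G k y x"
  define Q where "Q = qf G k y"
  have an: "a \<noteq> 0" using x a_def by simp
  have a'n: "a' \<noteq> 0" using nz a'_def by simp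
  have a'e: "a' = Q - B^2 / a" unfolding a'_def Q_def B_def a_def by (rule qf_proj[OF sym x(2)])
  have "Q \<in> normideal ord G k L"
    unfolding normideal_def Q_def
    by (rule CollectI, rule exI[of _ 1], rule exI[of _ "\<lambda>_. 1"], rule exI[of _ "\<lambda>_. y"])
       (simp add: y valring_iff vge_def ord1)
  then obtain c1 where c1: "Q = c1 * a" "c1 \<in> valring ord" unfolding ni[symmetric] a_def by blast
  have xy: "(\<lambda>t. x t + y t) \<in> L" using ac x y unfolding addclosed_def by blast
  have q3: "qf G k (\<lambda>t. x t + y t) = qf G k x + qf G k y + 2 * B"
  proof -
    have "qf G k (\<lambda>t. 1 * x t + 1 * y t) = qf G k x + qf G k y + bil G k x y + bil G k y x"
      unfolding qf_def bil_lin1 bil_lin2 by simp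
    then show ?thesis using bil_sym[OF sym, of k x y] unfolding B_def by simp
  qed
  have "2 * B \<in> normideal ord G k L"
    unfolding normideal_def
  proof (rule CollectI, rule exI[of _ "3::nat"],
      rule exI[of _ "\<lambda>i. if i = 0 then 1 else -1"],
      rule exI[of _ "\<lambda>i. if i = 0 then (\<lambda>t. x t + y t) else if i = 1 then x else y"], intro conjI)
    show "2 * B = (\<Sum>i<(3::nat). (if i = 0 then 1 else -1) * qf G k (if i = 0 then (\<lambda>t. x t + y t) else if i = 1 then x else y))"
      by (simp add: numeral_3_eq_3 q3)
    show "\<forall>i<(3::nat). (if i = 0 then 1 else - 1) \<in> valring ord \<and> (if i = 0 then (\<lambda>t. x t + y t) else if i = 1 then x else y) \<in> L"
      using xy x y by (auto simp: valring_iff vge_def ord1 ord_m1)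
  qed
  then obtain c2 where c2: "2 * B = c2 * a" "c2 \<in> valring ord" unfolding ni[symmetric] a_def by blast
  have Be: "B = c2 * a / 2" using c2(1) two by (metis nonzero_mult_div_cancel_left)
  have a'2: "a' = a * (c1 - c2^2 / 4)"
    unfolding a'e c1 Be by (rule t1[OF an])
  have o4: "ord (4::'a) = 2 * ord 2"
    using omult[of 2 2] two by simp
  have n4: "(4::'a) \<noteq> 0" proof -
    have "(2::'a) * 2 \<noteq> 0" using two by (simp only: mult_eq_0_iff de_Morgan_disj) simp
    moreover have "(2::'a) * 2 = 4" by simp
    ultimately show ?thesis by (simp only: not_False_eq_True)
  qed
  have vi4: "vge (inverse (4::'a)) (- (2 * ord 2))"
    unfolding vge_def by (rule disjI2) (simp only: ord_inv[OF n4] o4 order_refl)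
  have c2sq: "vge (c2^2) 0" using vge_mult[of c2 0 c2 0] c2 by (simp add: valring_iff power2_eq_square)
  have "vge (c2^2 * inverse 4) (0 + (- (2 * ord 2)))" by (rule vge_mult[OF c2sq vi4])
  then have "vge (c2^2 / 4) (0 + (- (2 * ord 2)))" by (simp only: divide_inverse)
  moreover have "vge c1 (- (2 * ord 2))" using c1 two_pos vge_mono[of c1 0] by (simp add: valring_iff)
  ultimately have "vge (c1 - c2^2/4) (- (2 * ord 2))"
    using vge_diff by simp
  then have "vge a' (ord a + (- (2 * ord 2)))" unfolding a'2 by (rule vge_mult[OF vge_ord])
  then show "ord (qf G k (proj G k x y)) \<ge> ord (qf G k x) - 2 * ord 2"
    using a'n unfolding a_def a'_def by (simp add: vge_def)
  have m: "-(a * a') - B^2 = - (a^2 * c1)"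
    unfolding a'e c1 by (rule t2[OF an])
  show "qd ord (-(qf G k x * qf G k (proj G k x y))) \<ge> ereal (real_of_int (ord (qf G k x) - ord (qf G k (proj G k x y))))"
  proof (cases "c1 = 0")
    case True
    then have "-(a*a') = B^2" using m by simp
    then show ?thesis using qd_square unfolding a_def a'_def by simp
  next
    case False
    then have "-(a*a') - B^2 \<noteq> 0" using m an by simp
    from qd_witness[OF this] have qdw: "qd ord (-(a*a')) \<ge> ereal (real_of_int (ord (-(a^2*c1)) - ord (-(a*a'))))"
      unfolding m .
    moreover have "ord c1 \<ge> 0" using c1 False by (simp add: valring_def)
    moreover have "ord (-(a^2*c1)) = 2 * ord a + ord c1" using an False
      by (simp add: ord_neg omult power2_eq_square)
    moreover have "ord (-(a*a')) = ord a + ord a'" using an a'n by (simp add: ord_neg omult)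
    ultimately have "ereal (real_of_int (ord a - ord a')) \<le> ereal (real_of_int (ord (-(a^2*c1)) - ord (-(a*a'))))"
      by simp
    with qdw have "qd ord (-(a*a')) \<ge> ereal (real_of_int (ord a - ord a'))" using order_trans by blast
    then show ?thesis unfolding a_def a'_def .
  qed
qed

end


context vf begin

lemma bong_nz: "is_BONG ord G k L xs \<Longrightarrow> i < length xs \<Longrightarrow> qf G k (xs!i) \<noteq> 0"
proof (induction xs arbitrary: L i)
  case (Cons x xs)
  then show ?case by (cases i) auto
qed simp

lemma bong_step:
  assumes sym: "\<forall>i i'. G i i' = G i' i"
  shows "is_BONG ord G k L xs \<Longrightarrow> addclosed L \<Longrightarrow> Suc i < length xs \<Longrightarrow>
    ord (qf G k (xs!Suc i)) \<ge> ord (qf G k (xs!i)) - 2 * ord 2 \<and>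
    qd ord (-(qf G k (xs!i) * qf G k (xs!Suc i))) \<ge> ereal (real_of_int (ord (qf G k (xs!i)) - ord (qf G k (xs!Suc i))))"
proof (induction xs arbitrary: L i)
  case Nil then show ?case by simp
next
  case (Cons x xs)
  have x: "x \<in> L" "qf G k x \<noteq> 0" and ni: "{c * qf G k x | c. c \<in> valring ord} = normideal ord G k L"
    and b: "is_BONG ord G k (proj G k x ` L) xs" using Cons.prems(1) by auto
  show ?case
  proof (cases i)
    case 0
    then obtain x' xs' where xs: "xs = x' # xs'" using Cons.prems(3) by (cases xs) auto
    then have "x' \<in> proj G k x ` L" "qf G k x' \<noteq> 0" using b by auto
    then obtain y where y: "y \<in> L" "x' = proj G k x y" by blast
    show ?thesis using bong_core[OF sym Cons.prems(2) x ni y(1)] y `qf G k x' \<noteq> 0` 0 xs by simp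
  next
    case (Suc i')
    have "Suc i' < length xs" using Cons.prems(3) Suc by simp
    from Cons.IH[OF b addclosed_proj[OF Cons.prems(2)] this] show ?thesis using Suc by simp
  qed
qed

end



lemma alpha_eq: "alpha ord a m i = Min ({ereal ((real_of_int (ord (a (i+1))) - real_of_int (ord (a i))) / 2 + real_of_int (ord 2))}
      \<union> (\<lambda>j. ereal (real_of_int (ord (a (i+1)) - ord (a j))) + qd ord (- (a j * a (j+1)))) ` {1..i}
      \<union> (\<lambda>j. ereal (real_of_int (ord (a (j+1)) - ord (a i))) + qd ord (- (a j * a (j+1)))) ` {i..m-1})"
  unfolding alpha_def by (rule arg_cong[where f=Min]) auto

lemma alpha_le0: "alpha ord a m i \<le> ereal ((real_of_int (ord (a (i+1))) - real_of_int (ord (a i))) / 2 + real_of_int (ord 2))"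
  unfolding alpha_eq by (rule Min_le) auto
lemma alpha_le1: "1 \<le> t \<Longrightarrow> t \<le> i \<Longrightarrow> alpha ord a m i \<le> ereal (real_of_int (ord (a (i+1)) - ord (a t))) + qd ord (- (a t * a (t+1)))"
  unfolding alpha_eq by (rule Min_le) auto
lemma alpha_le2: "i \<le> t \<Longrightarrow> t \<le> m - 1 \<Longrightarrow> alpha ord a m i \<le> ereal (real_of_int (ord (a (t+1)) - ord (a i))) + qd ord (- (a t * a (t+1)))"
  unfolding alpha_eq by (rule Min_le) auto
lemma alpha_ge:
  assumes "X \<le> ereal ((real_of_int (ord (a (i+1))) - real_of_int (ord (a i))) / 2 + real_of_int (ord 2))"
    and "\<And>t. 1 \<le> t \<Longrightarrow> t \<le> i \<Longrightarrow> X \<le> ereal (real_of_int (ord (a (i+1)) - ord (a t))) + qd ord (- (a t * a (t+1)))"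
    and "\<And>t. i \<le> t \<Longrightarrow> t \<le> m - 1 \<Longrightarrow> X \<le> ereal (real_of_int (ord (a (t+1)) - ord (a i))) + qd ord (- (a t * a (t+1)))"
  shows "X \<le> alpha ord a m i"
  unfolding alpha_eq using assms by (subst Min_ge_iff) auto

lemma dlf_vf: "dyadic_local_field ord \<Longrightarrow> vf ord"
  unfolding dyadic_local_field_def by unfold_locales auto

context vf begin

lemma gbl_facts:
  assumes sym: "\<forall>i i'. G i i' = G i' i" and g: "good_BONG_lattice ord G k L a m"
  shows "\<And>i. 1 \<le> i \<Longrightarrow> i \<le> m \<Longrightarrow> a i \<noteq> 0"
    and "\<And>i. 1 \<le> i \<Longrightarrow> i + 1 \<le> m \<Longrightarrow> ord (a (i+1)) \<ge> ord (a i) - 2 * ord 2"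
    and "\<And>i. 1 \<le> i \<Longrightarrow> i + 1 \<le> m \<Longrightarrow> qd ord (-(a i * a (i+1))) \<ge> ereal (real_of_int (ord (a i) - ord (a (i+1))))"
    and "\<And>i s. 1 \<le> i \<Longrightarrow> i + 2 * s \<le> m \<Longrightarrow> ord (a i) \<le> ord (a (i + 2 * s))"
    and "integral_lattice ord G k L \<Longrightarrow> 1 \<le> m \<Longrightarrow> ord (a 1) \<ge> 0"
proof -
  obtain xs where lat: "is_lattice ord k L" and b: "is_BONG ord G k L xs" and len: "length xs = m"
    and aq: "\<And>i. 1 \<le> i \<Longrightarrow> i \<le> m \<Longrightarrow> qf G k (xs ! (i - 1)) = a i"
    and gd: "\<And>i. 1 \<le> i \<Longrightarrow> i + 2 \<le> m \<Longrightarrow> ord (a i) \<le> ord (a (i + 2))"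
    using g unfolding good_BONG_lattice_def by blast
  show nz: "\<And>i. 1 \<le> i \<Longrightarrow> i \<le> m \<Longrightarrow> a i \<noteq> 0"
    using bong_nz[OF b] aq len by (metis Suc_le_eq Suc_pred' less_eq_Suc_le not_le zero_less_one order_less_le_trans)
  have st: "\<And>i. 1 \<le> i \<Longrightarrow> i + 1 \<le> m \<Longrightarrow> ord (a (i+1)) \<ge> ord (a i) - 2 * ord 2 \<and>
      qd ord (-(a i * a (i+1))) \<ge> ereal (real_of_int (ord (a i) - ord (a (i+1))))"
  proof -
    fix i assume i: "1 \<le> i" "i + 1 \<le> m"
    have "Suc (i - 1) < length xs" using i len by simp
    from bong_step[OF sym b lattice_addclosed[OF lat] this]
    show "ord (a (i+1)) \<ge> ord (a i) - 2 * ord 2 \<and>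
      qd ord (-(a i * a (i+1))) \<ge> ereal (real_of_int (ord (a i) - ord (a (i+1))))"
      using aq[of i] aq[of "i+1"] i by simp
  qed
  then show "\<And>i. 1 \<le> i \<Longrightarrow> i + 1 \<le> m \<Longrightarrow> ord (a (i+1)) \<ge> ord (a i) - 2 * ord 2"
    and "\<And>i. 1 \<le> i \<Longrightarrow> i + 1 \<le> m \<Longrightarrow> qd ord (-(a i * a (i+1))) \<ge> ereal (real_of_int (ord (a i) - ord (a (i+1))))"
    by auto
  show "\<And>i s. 1 \<le> i \<Longrightarrow> i + 2 * s \<le> m \<Longrightarrow> ord (a i) \<le> ord (a (i + 2 * s))"
  proof -
    fix i s assume "1 \<le> i" "i + 2 * s \<le> m"
    then show "ord (a i) \<le> ord (a (i + 2 * s))"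
    proof (induction s)
      case (Suc s)
      then have "ord (a i) \<le> ord (a (i + 2 * s))" by simp
      also have "\<dots> \<le> ord (a (i + 2 * s + 2))" using gd[of "i + 2*s"] Suc.prems by simp
      finally show ?case by (simp add: add.assoc)
    qed simp
  qed
  show "integral_lattice ord G k L \<Longrightarrow> 1 \<le> m \<Longrightarrow> ord (a 1) \<ge> 0"
  proof -
    assume il: "integral_lattice ord G k L" and m1: "1 \<le> m"
    obtain x xs' where xs: "xs = x # xs'" using len m1 by (cases xs) auto
    then have "x \<in> L" using b by simp
    then have "qf G k x \<in> valring ord" using il unfolding integral_lattice_def by blast
    moreover have "qf G k x = a 1" using aq[of 1] m1 xs by simp
    ultimately show "ord (a 1) \<ge> 0" using nz[of 1] m1 by (simp add: valring_def)
  qed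
qed

end



lemma eH: "D \<le> ereal v + \<beta> \<Longrightarrow> \<beta> \<le> ereal u + q \<Longrightarrow> v + u \<le> w \<Longrightarrow> D \<le> ereal w + (q::ereal)"
  by (cases q; cases \<beta>; cases D) auto
lemma eH2: "D \<le> ereal w + q \<Longrightarrow> w \<le> 0 \<Longrightarrow> D \<le> (q::ereal)"
  by (cases q; cases D) auto
lemma eS: "q \<ge> ereal c \<Longrightarrow> x + c \<ge> r \<Longrightarrow> ereal x + q \<ge> ereal r"
  by (cases q) auto

lemma chain:
  assumes "\<And>i s. 1 \<le> i \<Longrightarrow> i + 2 * s \<le> m \<Longrightarrow> (f::nat\<Rightarrow>int) i \<le> f (i + 2 * s)"
    and "1 \<le> i" "i \<le> i'" "i' \<le> m" "even (i' - i)"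
  shows "f i \<le> f i'"
proof -
  obtain s where s: "i' - i = 2 * s" using assms(5) by blast
  then have "i' = i + 2 * s" using assms(3) by simp
  then show ?thesis using assms(1)[of i s] assms by simp
qed

theorem lemma2p9:
  fixes ord :: "'a::field \<Rightarrow> int"
    and G H :: "nat \<Rightarrow> nat \<Rightarrow> 'a" and k l m n j :: nat
    and M N :: "(nat \<Rightarrow> 'a) set" and a b :: "nat \<Rightarrow> 'a"
  assumes "dyadic_local_field ord"
    and "\<forall>i i'. G i i' = G i' i" and "\<forall>i i'. H i i' = H i' i"
    and "good_BONG_lattice ord G k M a m" and "integral_lattice ord G k M"
    and "good_BONG_lattice ord H l N b n" and "integral_lattice ord H l N"
    and "n \<le> m"
    and "1 \<le> j" and "j \<le> min (m - 1) n" and "even j"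
    and "ord (a j) = - 2 * ord 2" and "ord (a (j + 1)) = 0"
  shows "dbr ord a m b n 1 j j \<ge> Acoef ord a m b n j"
proof -
  interpret vf ord by (rule dlf_vf[OF assms(1)])
  note MA = gbl_facts[OF assms(2) assms(4)]
  note NB = gbl_facts[OF assms(3) assms(6)]
  define E where "E = ord (2::'a)"
  have Rj: "ord (a j) = - 2 * E" and Rj1: "ord (a (j+1)) = 0" using assms(12,13) E_def by auto
  have j2: "2 \<le> j" using assms(9,11) by (cases "j = 1") auto
  have jm: "j + 1 \<le> m" and jn: "j \<le> n" using assms(10) j2 by auto
  have S1: "ord (b 1) \<ge> 0" using NB(5)[OF assms(7)] jn j2 by simp
  have S2: "ord (b 2) \<ge> ord (b 1) - 2 * E" using NB(2)[of 1] jn j2 E_def by (simp add: numeral_2_eq_2)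
  have "ord (b 2) \<le> ord (b j)"
    by (rule chain[where f="\<lambda>i. ord (b i)", OF NB(4)]) (use j2 jn assms(11) in auto)
  then have Sj: "ord (b j) \<ge> - 2 * E" using S1 S2 by linarith
  have R1: "ord (a 1) \<ge> 0" using MA(5)[OF assms(5)] jm by simp
  have Rev: "\<And>t. 1 \<le> t \<Longrightarrow> t \<le> j \<Longrightarrow> even t \<Longrightarrow> ord (a t) \<le> - 2 * E"
  proof -
    fix t assume "1 \<le> t" "t \<le> j" "even t"
    then have "ord (a t) \<le> ord (a j)"
      by (intro chain[where f="\<lambda>i. ord (a i)", OF MA(4)]) (use jm assms(11) in auto)
    then show "ord (a t) \<le> - 2 * E" using Rj by simp
  qed
  have Rodd: "\<And>t. 1 \<le> t \<Longrightarrow> t \<le> m \<Longrightarrow> odd t \<Longrightarrow> ord (a t) \<ge> 0"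
  proof -
    fix t assume "1 \<le> t" "t \<le> m" "odd t"
    then have "ord (a 1) \<le> ord (a t)"
      by (intro chain[where f="\<lambda>i. ord (a i)", OF MA(4)]) auto
    then show "ord (a t) \<ge> 0" using R1 by simp
  qed
  have Sodd: "\<And>t. 1 \<le> t \<Longrightarrow> t \<le> n \<Longrightarrow> odd t \<Longrightarrow> ord (b t) \<ge> 0"
  proof -
    fix t assume "1 \<le> t" "t \<le> n" "odd t"
    then have "ord (b 1) \<le> ord (b t)"
      by (intro chain[where f="\<lambda>i. ord (b i)", OF NB(4)]) auto
    then show "ord (b t) \<ge> 0" using S1 by simp
  qed
  define D where "D = Acoef ord a m b n j"
  have D1: "D \<le> ereal (real_of_int (ord (a (j+1)) - ord (b j)) / 2 + real_of_int (ord 2))"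
    unfolding D_def Acoef_def by simp
  have "dbr ord a m b n (-1) (j+1) (j-1) \<le> alpha ord b n (j-1)"
  proof -
    have "j - 1 \<noteq> 0" "j - 1 \<noteq> n" using j2 jn by auto
    then show ?thesis unfolding dbr_def by (intro min.coboundedI2) simp
  qed
  then have "ereal (real_of_int (ord (a (j+1)) - ord (b j))) + dbr ord a m b n (-1) (j+1) (j-1)
     \<le> ereal (real_of_int (ord (a (j+1)) - ord (b j))) + alpha ord b n (j-1)" by (rule add_left_mono)
  moreover have "D \<le> ereal (real_of_int (ord (a (j+1)) - ord (b j))) + dbr ord a m b n (-1) (j+1) (j-1)"
    unfolding D_def Acoef_def by (rule min.coboundedI2, rule min.coboundedI1, rule order_refl)
  ultimately have "D \<le> ereal (real_of_int (ord (a (j+1)) - ord (b j))) + alpha ord b n (j-1)"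
    by (rule order_trans[rotated])
  then have D2: "D \<le> ereal (real_of_int (- ord (b j))) + alpha ord b n (j-1)" using Rj1 by simp
  have "ereal (real_of_int (ord (a (j+1)) - ord (b j)) / 2 + real_of_int (ord 2)) \<le> ereal (real_of_int (2 * E))"
    using Sj unfolding E_def Rj1 by simp
  with D1 have DE: "D \<le> ereal (real_of_int (2 * E))" by (rule order_trans)
  have A: "ereal (real_of_int (2 * E)) \<le> alpha ord a m j"
  proof (rule alpha_ge)
    show "ereal (real_of_int (2 * E)) \<le> ereal ((real_of_int (ord (a (j+1))) - real_of_int (ord (a j))) / 2 + real_of_int (ord 2))"
      using Rj Rj1 E_def by simp
  next
    fix t assume t: "1 \<le> t" "t \<le> j"
    show "ereal (real_of_int (2 * E)) \<le> ereal (real_of_int (ord (a (j+1)) - ord (a t))) + qd ord (- (a t * a (t+1)))"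
    proof (cases "even t")
      case True
      then show ?thesis using eS[OF qd_nonneg[unfolded zero_ereal_def]] Rev[OF t True] Rj1 by simp
    next
      case False
      then have "t + 1 \<le> j" using t assms(11) by (cases "t = j") auto
      then have "ord (a (t+1)) \<le> - 2 * E" using Rev[of "t+1"] False by simp
      moreover have "qd ord (- (a t * a (t+1))) \<ge> ereal (real_of_int (ord (a t) - ord (a (t+1))))"
        using MA(3)[of t] t jm by simp
      ultimately show ?thesis using eS[where c="real_of_int (ord (a t) - ord (a (t+1)))" and x="real_of_int (ord (a (j+1)) - ord (a t))" and r="real_of_int (2*E)"] Rj1 by simp
    qed
  next
    fix t assume t: "j \<le> t" "t \<le> m - 1"
    have tm: "t + 1 \<le> m" using t jm by simp
    show "ereal (real_of_int (2 * E)) \<le> ereal (real_of_int (ord (a (t+1)) - ord (a j))) + qd ord (- (a t * a (t+1)))"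
    proof (cases "even t")
      case True
      then have "ord (a (t+1)) \<ge> 0" using Rodd[of "t+1"] tm by simp
      then show ?thesis using eS[OF qd_nonneg[unfolded zero_ereal_def]] Rj by simp
    next
      case False
      then have "ord (a t) \<ge> 0" using Rodd[of t] tm t j2 by simp
      moreover have "qd ord (- (a t * a (t+1))) \<ge> ereal (real_of_int (ord (a t) - ord (a (t+1))))"
        using MA(3)[of t] t tm j2 by simp
      ultimately show ?thesis using eS[where c="real_of_int (ord (a t) - ord (a (t+1)))" and x="real_of_int (ord (a (t+1)) - ord (a j))" and r="real_of_int (2*E)"] Rj by simp
    qed
  qed
  have B: "D \<le> (if j = 0 \<or> j = n then \<infinity> else alpha ord b n j)"
  proof (cases "j = n")
    case True then show ?thesis by simp
  next
    case False
    then have jn1: "j \<le> n - 1" "j + 1 \<le> n" using jn by auto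
    have Sj1: "ord (b (j+1)) \<ge> 0" using Sodd[of "j+1"] jn1 assms(11) by simp
    have Sjm: "ord (b (j-1)) \<ge> 0" using Sodd[of "j-1"] jn j2 assms(11) by simp
    have jj: "j - 1 + 1 = j" using j2 by simp
    have "D \<le> alpha ord b n j"
    proof (rule alpha_ge)
      have "ereal (real_of_int (ord (a (j+1)) - ord (b j)) / 2 + real_of_int (ord 2))
          \<le> ereal ((real_of_int (ord (b (j+1))) - real_of_int (ord (b j))) / 2 + real_of_int (ord 2))"
        using Sj1 Rj1 by simp
      with D1 show "D \<le> ereal ((real_of_int (ord (b (j+1))) - real_of_int (ord (b j))) / 2 + real_of_int (ord 2))"
        by (rule order_trans)
    next
      fix t assume t: "1 \<le> t" "t \<le> j"
      show "D \<le> ereal (real_of_int (ord (b (j+1)) - ord (b t))) + qd ord (- (b t * b (t+1)))"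
      proof (cases "t \<le> j - 1")
        case True
        have "alpha ord b n (j-1) \<le> ereal (real_of_int (ord (b j) - ord (b t))) + qd ord (- (b t * b (t+1)))"
          using alpha_le1[of t "j-1" ord b n] t True jj by simp
        from eH[OF D2 this] show ?thesis using Sj1 by simp
      next
        case False
        then have tj: "t = j" using t by simp
        have "alpha ord b n (j-1) \<le> ereal (real_of_int (ord (b (j+1)) - ord (b (j-1)))) + qd ord (- (b j * b (j+1)))"
          using alpha_le2[of "j-1" j n ord b] jn1 by simp
        from eH[OF D2 this] show ?thesis using Sjm tj by simp
      qed
    next
      fix t assume t: "j \<le> t" "t \<le> n - 1"
      have "alpha ord b n (j-1) \<le> ereal (real_of_int (ord (b (t+1)) - ord (b (j-1)))) + qd ord (- (b t * b (t+1)))"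
        using alpha_le2[of "j-1" t n ord b] t by simp
      from eH[OF D2 this] show "D \<le> ereal (real_of_int (ord (b (t+1)) - ord (b j))) + qd ord (- (b t * b (t+1)))"
        using Sjm by simp
    qed
    then show ?thesis by simp
  qed
  have P: "\<And>s. 2 * s \<le> j \<Longrightarrow> D \<le> qd ord (prodr a 1 (2*s) * prodr b 1 (2*s))"
  proof -
    fix s show "2 * s \<le> j \<Longrightarrow> D \<le> qd ord (prodr a 1 (2*s) * prodr b 1 (2*s))"
    proof (induction s)
      case 0
      have "qd ord (prodr a 1 0 * prodr b 1 0) = \<infinity>" by (rule qd_square[of _ 1]) (simp add: prodr_def)
      then show ?case by simp
    next
      case (Suc s)
      define t where "t = 2 * s + 1"
      have tj: "t + 1 \<le> j" using Suc.prems t_def by simp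
      have eq: "prodr a 1 (2 * Suc s) * prodr b 1 (2 * Suc s) =
          (prodr a 1 (2*s) * prodr b 1 (2*s)) * ((-(a t * a (t+1))) * (-(b t * b (t+1))))"
        unfolding prodr_step t_def by (rule eq_pairs)
      have nza: "prodr a 1 (2*s) \<noteq> 0" using prodr_nz[OF MA(1)] Suc.prems jm by simp
      have nzb: "prodr b 1 (2*s) \<noteq> 0" using prodr_nz[OF NB(1)] Suc.prems jn by simp
      have nzt: "-(a t * a (t+1)) \<noteq> 0" "-(b t * b (t+1)) \<noteq> 0"
        using MA(1)[of t] MA(1)[of "t+1"] NB(1)[of t] NB(1)[of "t+1"] tj jm jn t_def by auto
      have qa: "D \<le> qd ord (-(a t * a (t+1)))"
      proof -
        have "ord (a t) \<ge> 0" using Rodd[of t] tj jm t_def by simp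
        moreover have "ord (a (t+1)) \<le> - 2 * E" using Rev[of "t+1"] tj t_def by simp
        moreover have q1: "qd ord (- (a t * a (t+1))) \<ge> ereal (real_of_int (ord (a t) - ord (a (t+1))))"
          using MA(3)[of t] tj jm t_def by simp
        moreover have q2: "ereal (real_of_int (2 * E)) \<le> ereal (real_of_int (ord (a t) - ord (a (t+1))))"
          using calculation(1,2) by simp
        have "ereal (real_of_int (2 * E)) \<le> qd ord (- (a t * a (t+1)))"
          using q2 q1 by (rule order_trans)
        with DE show ?thesis by (rule order_trans)
      qed
      have qb: "D \<le> qd ord (-(b t * b (t+1)))"
      proof -
        have jj: "j - 1 + 1 = j" using j2 by simp
        have "alpha ord b n (j-1) \<le> ereal (real_of_int (ord (b j) - ord (b t))) + qd ord (- (b t * b (t+1)))"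
          using alpha_le1[of t "j-1" ord b n] tj jj t_def by simp
        from eH[OF D2 this order_refl] have Dle: "D \<le> ereal (real_of_int (- ord (b j)) + real_of_int (ord (b j) - ord (b t))) + qd ord (- (b t * b (t+1)))" .
        have "ord (b t) \<ge> 0" using Sodd[of t] tj jn t_def by simp
        then have w0: "real_of_int (- ord (b j)) + real_of_int (ord (b j) - ord (b t)) \<le> 0" by simp
        show ?thesis by (rule eH2[OF Dle w0])
      qed
      have h4: "D \<le> qd ord ((-(a t * a (t+1))) * (-(b t * b (t+1))))"
        by (rule qd_mult[OF nzt qa qb])
      have h3: "D \<le> qd ord (prodr a 1 (2*s) * prodr b 1 (2*s))" using Suc by simp
      have h1: "prodr a 1 (2*s) * prodr b 1 (2*s) \<noteq> 0" using nza nzb by simp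
      have h2: "(-(a t * a (t+1))) * (-(b t * b (t+1))) \<noteq> 0" using nzt by simp
      have "D \<le> qd ord ((prodr a 1 (2*s) * prodr b 1 (2*s)) * ((-(a t * a (t+1))) * (-(b t * b (t+1)))))"
        by (rule qd_mult[OF h1 h2 h3 h4])
      then show ?case unfolding eq .
    qed
  qed
  have jd: "2 * (j div 2) = j" using assms(11) by simp
  have C: "D \<le> qd ord (1 * prodr a 1 j * prodr b 1 j)" using P[of "j div 2"] jd by simp
  have Aj: "D \<le> alpha ord a m j" using DE A by (rule order_trans)
  have ifa: "(if j = 0 \<or> j = m then \<infinity> else alpha ord a m j) = alpha ord a m j" using j2 jm by simp
  show ?thesis unfolding D_def[symmetric] dbr_def ifa min.bounded_iff using Aj B C by blast
qed


end
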